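(* Let $(P,H,\phi)$ be a host-parasite triple and let $\Psi=\{\psi_1,\dots,\psi_l\}\subseteq\mathcal R(P,H,\phi)$ with $l\ge 1$. Define $\psi_{med}=\psi^{\Psi}_{med}:V(P)\to V(H)$ by letting, for each $v\in V(P)$, $\psi_{med}(v)$ be the element $w\in A(v)$ with $d_H(m(v),w)=zmed(n_1,\dots,n_l)$, where $n_i=d_H(m(v),\psi_i(v))$ for $1\le i\le l$. Then $\psi_{med}\in\mathcal R(P,H,\phi)$.
   Context: A phylogenetic tree $T$ is a finite rooted tree with root $\rho_T$ (indegree $0$, outdegree $2$), in which every vertex other than the root and the leaves has indegree $1$ and outdegree $2$; $V(T)$ is its vertex set, $L(T)$ its leaf set, $V^o(T)=V(T)-L(T)$. $x\succeq_T y$ means $x$ lies on the path from $\rho_T$ to $y$ (i.e. $x$ is an ancestor of $y$ or $x=y$). For $L\subseteq L(T)$ with $|L|\ge 2$, $lca_T(L)$ is the lowest vertex above every element of $L$; if $L=\{x\}$ then $lca_T(L)=x$. $d_T(v,w)$ is the number of edges on the (undirected) path in $T$ between $v$ and $w$. A host-parasite triple $(P,H,\phi)$ consists of two phylogenetic trees $P,H$ and a map $\phi:L(P)\to L(H)$. A reconciliation map is a map $\psi:V(P)\to V(H)$ such that (i) $\psi$ restricted to $L(P)$ equals $\phi$, and (ii) for every $v\in V^o(P)$ and every child $v'$ of $v$, $\psi(v)\succeq_H\psi(v')$; $\mathcal R(P,H,\phi)$ denotes the set of all reconciliation maps. For $v\in V(P)$ let $m(v)=lca_H(\{\phi(x):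 x\in L(P),\ v\succeq_P x\})$ and $A(v)=\{w\in V(H): \rho_H\succeq_H w\succeq_H m(v)\}$ (the vertices on the path from $m(v)$ up to $\rho_H$). Every reconciliation $\psi$ satisfies $\psi(v)\in A(v)$. For a finite multiset $A$ of real numbers, $med(A)$ is its median (the middle element when ordered; for even cardinality, the average of the two middle elements). For a real $r$, $[r]$ is the integer nearest to $r$, and the larger of the two if there are two nearest integers. For a multiset $A=\{n_1,\dots,n_m\}$ of integers, $zmed(n_1,\dots,n_m)=zmed(A)=[med(A)]$. *)

theory Defs
  imports Complex_Main "HOL-Library.Multiset"
begin

text \<open>A rooted tree is given by a vertex set V, a set E of directed edges
 (parent, child) and a root r.\<close>

definition phylo_tree :: "'v set \<Rightarrow> ('v \<times> 'v) set \<Rightarrow> 'v \<Rightarrow> bool" where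
  "phylo_tree V E r \<longleftrightarrow>
     finite V \<and> E \<subseteq> V \<times> V \<and> r \<in> V \<and>
     (\<forall>x\<in>V. (r, x) \<in> E\<^sup>*) \<and>
     {u. (u, r) \<in> E} = {} \<and> card {w. (r, w) \<in> E} = 2 \<and>
     (\<forall>v\<in>V - {r}. card {u. (u, v) \<in> E} = 1 \<and>
        (card {w. (v, w) \<in> E} = 0 \<or> card {w. (v, w) \<in> E} = 2))"

definition leaves :: "'v set \<Rightarrow> ('v \<times> 'v) set \<Rightarrow> 'v set" where
  "leaves V E = {v \<in> V. \<forall>w. (v, w) \<notin> E}"

definition anc :: "('v \<times> 'v) set \<Rightarrow> 'v \<Rightarrow> 'v \<Rightarrow> bool" where
  "anc E x y \<longleftrightarrow> (x, y) \<in> E\<^sup>*"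

definition lca :: "'v set \<Rightarrow> ('v \<times> 'v) set \<Rightarrow> 'v set \<Rightarrow> 'v" where
  "lca V E L = (if \<exists>x. L = {x} then (THE x. L = {x})
     else (THE x. x \<in> V \<and> (\<forall>y\<in>L. anc E x y) \<and>
                  (\<forall>z\<in>V. (\<forall>y\<in>L. anc E z y) \<longrightarrow> anc E z x)))"

definition dist :: "('v \<times> 'v) set \<Rightarrow> 'v \<Rightarrow> 'v \<Rightarrow> nat" where
  "dist E v w = (LEAST n. (v, w) \<in> (E \<union> E\<inverse>) ^^ n)"

definition reconciliations ::
  "'p set \<Rightarrow> ('p \<times> 'p) set \<Rightarrow> 'h set \<Rightarrow> ('h \<times> 'h) set \<Rightarrow> ('p \<Rightarrow> 'h) \<Rightarrow> ('p \<Rightarrow> 'h) set" where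
  "reconciliations VP EP VH EH phi =
     {psi. (\<forall>v\<in>VP. psi v \<in> VH) \<and>
           (\<forall>x\<in>leaves VP EP. psi x = phi x) \<and>
           (\<forall>v\<in>VP - leaves VP EP. \<forall>v'. (v, v') \<in> EP \<longrightarrow> anc EH (psi v) (psi v'))}"

definition mvert ::
  "'p set \<Rightarrow> ('p \<times> 'p) set \<Rightarrow> 'h set \<Rightarrow> ('h \<times> 'h) set \<Rightarrow> ('p \<Rightarrow> 'h) \<Rightarrow> 'p \<Rightarrow> 'h" where
  "mvert VP EP VH EH phi v = lca VH EH (phi ` {x \<in> leaves VP EP. anc EP v x})"

definition Aset ::
  "'p set \<Rightarrow> ('p \<times> 'p) set \<Rightarrow> 'h set \<Rightarrow> ('h \<times> 'h) set \<Rightarrow> 'h \<Rightarrow> ('p \<Rightarrow> 'h) \<Rightarrow> 'p \<Rightarrow> 'h set" where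
  "Aset VP EP VH EH rH phi v =
     {w \<in> VH. anc EH rH w \<and> anc EH w (mvert VP EP VH EH phi v)}"

definition med :: "int multiset \<Rightarrow> real" where
  "med A = (let xs = sorted_list_of_multiset A; k = size A in
     if odd k then real_of_int (xs ! (k div 2))
     else (real_of_int (xs ! (k div 2 - 1)) + real_of_int (xs ! (k div 2))) / 2)"

text \<open>Nearest integer, the larger one in case of a tie.\<close>
definition nearest_int :: "real \<Rightarrow> int" where
  "nearest_int r = \<lfloor>r + 1/2\<rfloor>"

definition zmed :: "int multiset \<Rightarrow> int" where
  "zmed A = nearest_int (med A)"

definition psi_med ::
  "'p set \<Rightarrow> ('p \<times> 'p) set \<Rightarrow> 'h set \<Rightarrow> ('h \<times> 'h) set \<Rightarrow> 'h \<Rightarrow> ('p \<Rightarrow> 'h)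
     \<Rightarrow> nat \<Rightarrow> (nat \<Rightarrow> 'p \<Rightarrow> 'h) \<Rightarrow> 'p \<Rightarrow> 'h" where
  "psi_med VP EP VH EH rH phi l psi v =
     (THE w. w \<in> Aset VP EP VH EH rH phi v \<and>
        int (dist EH (mvert VP EP VH EH phi v) w) =
          zmed (mset (map (\<lambda>i. int (dist EH (mvert VP EP VH EH phi v) (psi i v))) [1..<l+1])))"

end

theory Submission
  imports Defs
begin

lemma pt_basic:
  assumes "phylo_tree V E r"
  shows "finite V" "E \<subseteq> V \<times> V" "r \<in> V" "\<And>x. x \<in> V \<Longrightarrow> (r, x) \<in> E\<^sup>*"
    "\<And>u. (u, r) \<notin> E"
  using assms unfolding phylo_tree_def by auto

lemma pt_parent_unique:
  assumes "phylo_tree V E r" "(u, z) \<in> E" "(u', z) \<in> E"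
  shows "u = u'"
proof -
  have z: "z \<in> V" "z \<noteq> r" using assms pt_basic[OF assms(1)] by auto
  then have "card {u. (u, z) \<in> E} = 1" using assms(1) unfolding phylo_tree_def by auto
  then obtain a where "{u. (u, z) \<in> E} = {a}" by (auto simp: card_1_singleton_iff)
  then show ?thesis using assms(2,3) by (metis mem_Collect_eq singletonD)
qed

lemma pt_acyclic:
  assumes "phylo_tree V E r"
  shows "(x, x) \<notin> E\<^sup>+"
proof
  assume h: "(x, x) \<in> E\<^sup>+"
  then have "x \<in> V" using pt_basic(2)[OF assms] by (auto dest: tranclD)
  then have "(r, x) \<in> E\<^sup>*" using pt_basic(4)[OF assms] by auto
  then show False using h
  proof (induction rule: rtrancl_induct)
    case base
    then obtain u where "(u, r) \<in> E" by (auto dest: tranclD2)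
    then show ?case using pt_basic(5)[OF assms] by auto
  next
    case (step y z)
    from step.prems obtain u where u: "(z, u) \<in> E\<^sup>*" "(u, z) \<in> E" by (auto dest: tranclD2)
    have "u = y" using pt_parent_unique[OF assms u(2) step.hyps(2)] .
    then have "(y, y) \<in> E\<^sup>+" using u step.hyps(2) by auto
    then show ?case using step.IH by auto
  qed
qed

lemma pt_antisym:
  assumes "phylo_tree V E r" "(a, b) \<in> E\<^sup>*" "(b, a) \<in> E\<^sup>*"
  shows "a = b"
proof (rule ccontr)
  assume "a \<noteq> b"
  then have "(a, b) \<in> E\<^sup>+" using assms(2) by (auto simp: rtrancl_eq_or_trancl)
  then have "(a, a) \<in> E\<^sup>+" using assms(3) by auto
  then show False using pt_acyclic[OF assms(1)] by auto
qed

lemma pt_chain: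
  assumes "phylo_tree V E r" "(a, y) \<in> E\<^sup>*" "(b, y) \<in> E\<^sup>*"
  shows "(a, b) \<in> E\<^sup>* \<or> (b, a) \<in> E\<^sup>*"
  using assms(2,3)
proof (induction arbitrary: b rule: rtrancl_induct)
  case base
  then show ?case by auto
next
  case (step y z)
  show ?case
  proof (cases "b = z")
    case True
    then show ?thesis using step.hyps by auto
  next
    case False
    then have "(b, z) \<in> E\<^sup>+" using step.prems by (auto simp: rtrancl_eq_or_trancl)
    then obtain y' where y': "(b, y') \<in> E\<^sup>*" "(y', z) \<in> E" by (auto dest: tranclD2)
    have "y' = y" using pt_parent_unique[OF assms(1) y'(2) step.hyps(2)] .
    then show ?thesis using step.IH y' by auto
  qed
qed

lemma pt_len_unique:
  assumes "phylo_tree V E r"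
  shows "(a, b) \<in> E ^^ n \<Longrightarrow> (a, b) \<in> E ^^ k \<Longrightarrow> n = k"
proof (induction n arbitrary: k b)
  case 0
  then have "a = b" by auto
  show ?case
  proof (cases k)
    case (Suc k')
    then have "(a, a) \<in> E\<^sup>+" using 0 \<open>a = b\<close> trancl_power by blast
    then show ?thesis using pt_acyclic[OF assms] by auto
  qed auto
next
  case (Suc n)
  from Suc.prems(1) obtain c where c: "(a, c) \<in> E ^^ n" "(c, b) \<in> E" by auto
  show ?case
  proof (cases k)
    case 0
    then have "a = b" using Suc.prems by auto
    then have "(a, a) \<in> E\<^sup>+" using Suc.prems(1) trancl_power by blast
    then show ?thesis using pt_acyclic[OF assms] by auto
  next
    case (Suc k')
    then obtain c' where c': "(a, c') \<in> E ^^ k'" "(c', b) \<in> E" using Suc.prems(2) by auto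
    have "c = c'" using pt_parent_unique[OF assms c(2) c'(2)] .
    then show ?thesis using Suc.IH[OF c(1)] c' \<open>k = Suc k'\<close> by auto
  qed
qed

definition depth :: "('v \<times> 'v) set \<Rightarrow> 'v \<Rightarrow> 'v \<Rightarrow> nat" where
  "depth E r x = (THE n. (r, x) \<in> E ^^ n)"

lemma pt_depth:
  assumes "phylo_tree V E r" "(r, x) \<in> E ^^ n"
  shows "depth E r x = n"
  unfolding depth_def
  by (rule the_equality) (use assms(2) pt_len_unique[OF assms(1)] in auto)

lemma pt_depth_path:
  assumes "phylo_tree V E r" "x \<in> V"
  shows "(r, x) \<in> E ^^ depth E r x"
proof -
  obtain n where "(r, x) \<in> E ^^ n" using pt_basic(4)[OF assms] rtrancl_power by blast
  then show ?thesis using pt_depth[OF assms(1)] by auto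
qed

lemma pt_depth_add:
  assumes "phylo_tree V E r" "(a, b) \<in> E ^^ j" "a \<in> V"
  shows "depth E r b = depth E r a + j"
proof -
  have "(r, b) \<in> E ^^ (depth E r a + j)"
    using pt_depth_path[OF assms(1,3)] assms(2) relpow_add by blast
  then show ?thesis using pt_depth[OF assms(1)] by auto
qed

lemma pt_anc_in:
  assumes "phylo_tree V E r" "(a, b) \<in> E\<^sup>*" "b \<in> V"
  shows "a \<in> V"
  using assms pt_basic(2)[OF assms(1)] by (cases "a = b") (auto simp: rtrancl_eq_or_trancl dest: tranclD)

lemma pt_depth_le:
  assumes "phylo_tree V E r" "(a, b) \<in> E\<^sup>*" "b \<in> V"
  shows "depth E r a \<le> depth E r b"
proof -
  obtain j where "(a, b) \<in> E ^^ j" using assms(2) rtrancl_power by blast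
  then show ?thesis using pt_depth_add[OF assms(1)] pt_anc_in[OF assms] by fastforce
qed

lemma pt_undirected_bound:
  assumes "phylo_tree V E r"
  shows "(x, y) \<in> (E \<union> E\<inverse>) ^^ n \<Longrightarrow> depth E r x \<le> depth E r y + n"
proof (induction n arbitrary: y)
  case 0
  then show ?case by auto
next
  case (Suc n)
  then obtain z where z: "(x, z) \<in> (E \<union> E\<inverse>) ^^ n" "(z, y) \<in> E \<union> E\<inverse>" by auto
  have "depth E r z \<le> depth E r y + 1"
  proof (cases "(z, y) \<in> E")
    case True
    then have "z \<in> V" using pt_basic(2)[OF assms] by auto
    then show ?thesis using pt_depth_add[OF assms, of z y 1] True by auto
  next
    case False
    then have "(y, z) \<in> E" using z by auto
    then have "y \<in> V" using pt_basic(2)[OF assms] by auto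
    then show ?thesis using pt_depth_add[OF assms, of y z 1] \<open>(y, z) \<in> E\<close> by auto
  qed
  then show ?case using Suc.IH[OF z(1)] by auto
qed

lemma relpow_converse_mem: "(a, b) \<in> R ^^ n \<Longrightarrow> (b, a) \<in> (R \<union> R\<inverse>) ^^ n"
proof (induction n arbitrary: b)
  case 0
  then show ?case by auto
next
  case (Suc n)
  then obtain c where "(a, c) \<in> R ^^ n" "(c, b) \<in> R" by auto
  then have "(c, a) \<in> (R \<union> R\<inverse>) ^^ n" using Suc.IH by auto
  moreover have "(b, c) \<in> R \<union> R\<inverse>" using \<open>(c, b) \<in> R\<close> by auto
  ultimately show ?case by (rule relpow_Suc_I2[rotated])
qed

lemma pt_dist:
  assumes "phylo_tree V E r" "(w, m) \<in> E\<^sup>*" "m \<in> V"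
  shows "dist E m w = depth E r m - depth E r w" "depth E r w \<le> depth E r m"
proof -
  obtain j where j: "(w, m) \<in> E ^^ j" using assms(2) rtrancl_power by blast
  have wV: "w \<in> V" using pt_anc_in[OF assms] .
  have dm: "depth E r m = depth E r w + j" using pt_depth_add[OF assms(1) j wV] .
  have "dist E m w = j"
    unfolding dist_def
  proof (rule Least_equality)
    show "(m, w) \<in> (E \<union> E\<inverse>) ^^ j" using relpow_converse_mem[OF j] .
  next
    fix n assume "(m, w) \<in> (E \<union> E\<inverse>) ^^ n"
    then have "depth E r m \<le> depth E r w + n" by (rule pt_undirected_bound[OF assms(1)])
    then show "j \<le> n" using dm by linarith
  qed
  then show "dist E m w = depth E r m - depth E r w" using dm by auto
  show "depth E r w \<le> depth E r m" using dm by auto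
qed

lemma pt_anc_by_depth:
  assumes "phylo_tree V E r" "(a, m) \<in> E\<^sup>*" "(b, m) \<in> E\<^sup>*" "m \<in> V"
    "depth E r a \<le> depth E r b"
  shows "(a, b) \<in> E\<^sup>*"
proof -
  from pt_chain[OF assms(1-3)] show ?thesis
  proof
    assume "(b, a) \<in> E\<^sup>*"
    then obtain j where j: "(b, a) \<in> E ^^ j" using rtrancl_power by blast
    have "b \<in> V" using pt_anc_in[OF assms(1,3,4)] .
    then have "depth E r a = depth E r b + j" using pt_depth_add[OF assms(1) j] by simp
    then have "j = 0" using assms(5) by linarith
    then have "b = a" using j by simp
    then show ?thesis by simp
  qed
qed

lemma pt_select:
  assumes "phylo_tree V E r" "m \<in> V" "k \<le> depth E r m"
  shows "\<exists>w. (w, m) \<in> E\<^sup>* \<and> depth E r w = depth E r m - k"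
proof -
  have eq: "depth E r m = (depth E r m - k) + k" using assms(3) by simp
  have "(r, m) \<in> E ^^ ((depth E r m - k) + k)" using pt_depth_path[OF assms(1,2)] eq by simp
  then have "(r, m) \<in> E ^^ (depth E r m - k) O E ^^ k" by (simp only: relpow_add)
  then obtain w where w: "(r, w) \<in> E ^^ (depth E r m - k)" "(w, m) \<in> E ^^ k"
    by (rule relcompE) auto
  have "depth E r w = depth E r m - k" using pt_depth[OF assms(1) w(1)] .
  then show ?thesis using w(2) relpow_imp_rtrancl by blast
qed


lemma pt_lca:
  assumes "phylo_tree V E r" "L \<subseteq> V" "L \<noteq> {}"
  shows "lca V E L \<in> V" "\<forall>y\<in>L. anc E (lca V E L) y"
    "\<And>z. z \<in> V \<Longrightarrow> \<forall>y\<in>L. anc E z y \<Longrightarrow> anc E z (lca V E L)"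
proof -
  have "lca V E L \<in> V \<and> (\<forall>y\<in>L. anc E (lca V E L) y) \<and>
    (\<forall>z\<in>V. (\<forall>y\<in>L. anc E z y) \<longrightarrow> anc E z (lca V E L))"
  proof (cases "\<exists>x. L = {x}")
    case True
    then obtain x where x: "L = {x}" by auto
    then have "lca V E L = x" unfolding lca_def by auto
    then show ?thesis using x assms(2) by (auto simp: anc_def)
  next
    case False
    define P where "P x \<longleftrightarrow> x \<in> V \<and> (\<forall>y\<in>L. anc E x y) \<and>
                  (\<forall>z\<in>V. (\<forall>y\<in>L. anc E z y) \<longrightarrow> anc E z x)" for x
    have lc: "lca V E L = (THE x. P x)" unfolding lca_def P_def using False by auto
    obtain y0 where y0: "y0 \<in> L" using assms(3) by auto
    define C where "C = {z \<in> V. \<forall>y\<in>L. anc E z y}"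
    have "r \<in> C" unfolding C_def anc_def using assms(2) pt_basic[OF assms(1)] by auto
    have finC: "finite C" unfolding C_def using pt_basic(1)[OF assms(1)] by auto
    obtain x where x: "x \<in> C" "depth E r x = Max (depth E r ` C)"
      using Max_in[of "depth E r ` C"] finC \<open>r \<in> C\<close> by fastforce
    have "P x"
      unfolding P_def
    proof (intro conjI ballI impI)
      show "x \<in> V" using x unfolding C_def by auto
      show "anc E x y" if "y \<in> L" for y using x that unfolding C_def by auto
      fix z assume z: "z \<in> V" "\<forall>y\<in>L. anc E z y"
      then have "z \<in> C" unfolding C_def by auto
      then have "depth E r z \<le> depth E r x" using x finC by auto
      moreover have "(z, y0) \<in> E\<^sup>*" "(x, y0) \<in> E\<^sup>*" using z x y0 unfolding C_def anc_def by auto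
      moreover have "y0 \<in> V" using y0 assms(2) by auto
      ultimately show "anc E z x" unfolding anc_def using pt_anc_by_depth[OF assms(1)] by blast
    qed
    moreover have "\<And>x'. P x' \<Longrightarrow> x' = x"
      using \<open>P x\<close> pt_antisym[OF assms(1)] unfolding P_def anc_def by blast
    ultimately have "lca V E L = x" unfolding lc by (rule the_equality)
    then show ?thesis using \<open>P x\<close> unfolding P_def by auto
  qed
  then show "lca V E L \<in> V" "\<forall>y\<in>L. anc E (lca V E L) y"
    "\<And>z. z \<in> V \<Longrightarrow> \<forall>y\<in>L. anc E z y \<Longrightarrow> anc E z (lca V E L)" by auto
qed

lemma pt_leaf_below:
  assumes "phylo_tree V E r" "v \<in> V"
  shows "\<exists>x\<in>leaves V E. (v, x) \<in> E\<^sup>*"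
proof -
  have finE: "finite E" using pt_basic(1,2)[OF assms(1)] finite_subset by blast
  have acyc: "acyclic E" unfolding acyclic_def using pt_acyclic[OF assms(1)] by auto
  have wf: "wf (E\<inverse>)" using finite_acyclic_wf_converse[OF finE acyc] .
  show ?thesis using assms(2)
  proof (induction v rule: wf_induct[OF wf])
    case (1 v)
    show ?case
    proof (cases "v \<in> leaves V E")
      case True
      then show ?thesis by auto
    next
      case False
      then obtain w where w: "(v, w) \<in> E" using 1 unfolding leaves_def by auto
      then have "w \<in> V" using pt_basic(2)[OF assms(1)] by auto
      then obtain x where "x \<in> leaves V E" "(w, x) \<in> E\<^sup>*" using 1 w by auto
      then show ?thesis using w by (meson converse_rtrancl_into_rtrancl)
    qed
  qed
qed


lemma len_filter_mset: "length (filter P (sort xs)) = length (filter P (xs::int list))"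
  by (metis mset_filter mset_sort size_mset)

lemma len_filter_map_mono:
  assumes "\<forall>i\<in>set I. f i \<le> g i + (c::int)"
  shows "length (filter (\<lambda>x. x \<le> t) (map g I)) \<le> length (filter (\<lambda>x. x \<le> t + c) (map f I))"
  using assms by (induction I) auto

lemma sorted_count_ge:
  assumes "sorted s" "k < length s"
  shows "Suc k \<le> length (filter (\<lambda>x. x \<le> s ! k) (s::int list))"
proof -
  have "\<forall>x\<in>set (take (Suc k) s). x \<le> s ! k"
    using assms by (auto simp: in_set_conv_nth sorted_nth_mono)
  then have "filter (\<lambda>x. x \<le> s ! k) (take (Suc k) s) = take (Suc k) s" by auto
  moreover have "length (filter (\<lambda>x. x \<le> s ! k) (take (Suc k) s)) \<le> length (filter (\<lambda>x. x \<le> s ! k) s)"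
    by (metis append_take_drop_id filter_append le_add1 length_append)
  ultimately show ?thesis using assms by auto
qed

lemma sorted_count_le:
  assumes "sorted s" "k < length s" "t < s ! k"
  shows "length (filter (\<lambda>x. x \<le> t) (s::int list)) \<le> k"
proof -
  have "\<forall>x\<in>set (drop k s). t < x"
  proof
    fix x assume "x \<in> set (drop k s)"
    then obtain i where i: "i < length s - k" "x = s ! (k + i)" by (auto simp: in_set_conv_nth)
    have "s ! k \<le> s ! (k + i)" using i assms(1) by (simp add: sorted_nth_mono)
    then show "t < x" using i assms(3) by simp
  qed
  then have "filter (\<lambda>x. x \<le> t) (drop k s) = []" by (auto simp: filter_empty_conv)
  then have "length (filter (\<lambda>x. x \<le> t) s) = length (filter (\<lambda>x. x \<le> t) (take k s))"
    by (metis append_Nil2 append_take_drop_id filter_append)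
  also have "\<dots> \<le> k" by (metis length_filter_le length_take min.bounded_iff nat_le_linear)
  finally show ?thesis .
qed

lemma os_mono:
  assumes "\<forall>i\<in>set I. f i \<le> g i + (c::int)" "k < length I"
  shows "sort (map f I) ! k \<le> sort (map g I) ! k + c"
proof (rule ccontr)
  let ?t = "sort (map g I) ! k"
  assume "\<not> ?thesis"
  then have lt: "?t + c < sort (map f I) ! k" by simp
  have "Suc k \<le> length (filter (\<lambda>x. x \<le> ?t) (sort (map g I)))"
    using sorted_count_ge[of "sort (map g I)" k] assms(2) by simp
  also have "\<dots> = length (filter (\<lambda>x. x \<le> ?t) (map g I))" by (rule len_filter_mset)
  also have "\<dots> \<le> length (filter (\<lambda>x. x \<le> ?t + c) (map f I))" by (rule len_filter_map_mono[OF assms(1)])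
  also have "\<dots> = length (filter (\<lambda>x. x \<le> ?t + c) (sort (map f I)))" by (rule len_filter_mset[symmetric])
  also have "\<dots> \<le> k" using sorted_count_le[of "sort (map f I)" k "?t + c"] assms(2) lt by simp
  finally show False by simp
qed

lemma os_bounds:
  assumes "\<forall>i\<in>set I. lo \<le> f i \<and> f i \<le> (hi::int)" "k < length I"
  shows "lo \<le> sort (map f I) ! k \<and> sort (map f I) ! k \<le> hi"
proof -
  have "sort (map f I) ! k \<in> set (map f I)"
    by (metis assms(2) length_map length_sort nth_mem set_sort)
  then have "sort (map f I) ! k \<in> f ` set I" by simp
  then show ?thesis using assms(1) by auto
qed

lemma avg_le: "a1 \<le> b1 + c \<Longrightarrow> a2 \<le> b2 + c \<Longrightarrow> (a1 + a2) / 2 \<le> (b1 + b2) / 2 + (c::real)"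
  by (simp add: field_simps)

lemma med_mono:
  assumes "\<forall>i\<in>set I. f i \<le> g i + (c::int)" "I \<noteq> []"
  shows "med (mset (map f I)) \<le> med (mset (map g I)) + c"
proof -
  have L: "0 < length I" using assms(2) by simp
  have a: "sort (map f I) ! (length I div 2) \<le> sort (map g I) ! (length I div 2) + c"
    by (rule os_mono[OF assms(1)]) (use L in auto)
  show ?thesis
  proof (cases "odd (length I)")
    case True
    then show ?thesis using a unfolding med_def Let_def sorted_list_of_multiset_mset by simp
  next
    case False
    have b: "sort (map f I) ! (length I div 2 - 1) \<le> sort (map g I) ! (length I div 2 - 1) + c"
      by (rule os_mono[OF assms(1)]) (use L in \<open>simp add: less_imp_diff_less\<close>)
    let ?h = "length I div 2"
    have mf: "med (mset (map f I)) = (real_of_int (sort (map f I) ! (?h - 1)) + real_of_int (sort (map f I) ! ?h)) / 2"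
      using False unfolding med_def Let_def sorted_list_of_multiset_mset by simp
    have mg: "med (mset (map g I)) = (real_of_int (sort (map g I) ! (?h - 1)) + real_of_int (sort (map g I) ! ?h)) / 2"
      using False unfolding med_def Let_def sorted_list_of_multiset_mset by simp
    have a': "real_of_int (sort (map f I) ! ?h) \<le> real_of_int (sort (map g I) ! ?h) + real_of_int c"
      using a by linarith
    have b': "real_of_int (sort (map f I) ! (?h - 1)) \<le> real_of_int (sort (map g I) ! (?h - 1)) + real_of_int c"
      using b by linarith
    show ?thesis unfolding mf mg using avg_le[OF b' a'] .
  qed
qed

lemma med_bounds:
  assumes "\<forall>i\<in>set I. lo \<le> f i \<and> f i \<le> (hi::int)" "I \<noteq> []"
  shows "real_of_int lo \<le> med (mset (map f I)) \<and> med (mset (map f I)) \<le> real_of_int hi"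
proof -
  have L: "0 < length I" using assms(2) by simp
  have a: "lo \<le> sort (map f I) ! (length I div 2) \<and> sort (map f I) ! (length I div 2) \<le> hi"
    by (rule os_bounds[OF assms(1)]) (use L in auto)
  show ?thesis
  proof (cases "odd (length I)")
    case True
    then show ?thesis using a unfolding med_def Let_def sorted_list_of_multiset_mset by simp
  next
    case False
    have b: "lo \<le> sort (map f I) ! (length I div 2 - 1) \<and> sort (map f I) ! (length I div 2 - 1) \<le> hi"
      by (rule os_bounds[OF assms(1)]) (use L in \<open>simp add: less_imp_diff_less\<close>)
    show ?thesis using False a b unfolding med_def Let_def sorted_list_of_multiset_mset by simp
  qed
qed

lemma zmed_mono:
  assumes "\<forall>i\<in>set I. f i \<le> g i + (c::int)" "I \<noteq> []"
  shows "zmed (mset (map f I)) \<le> zmed (mset (map g I)) + c"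
proof -
  have "med (mset (map f I)) + 1/2 \<le> (med (mset (map g I)) + 1/2) + of_int c"
    using med_mono[OF assms] by simp
  then have "\<lfloor>med (mset (map f I)) + 1/2\<rfloor> \<le> \<lfloor>(med (mset (map g I)) + 1/2) + of_int c\<rfloor>"
    by (rule floor_mono)
  then show ?thesis unfolding zmed_def nearest_int_def by simp
qed

lemma zmed_bounds:
  assumes "\<forall>i\<in>set I. lo \<le> f i \<and> f i \<le> (hi::int)" "I \<noteq> []"
  shows "lo \<le> zmed (mset (map f I)) \<and> zmed (mset (map f I)) \<le> hi"
proof -
  have m: "real_of_int lo \<le> med (mset (map f I)) \<and> med (mset (map f I)) \<le> real_of_int hi" using med_bounds[OF assms] .
  have "\<lfloor>of_int lo + (1/2::real)\<rfloor> \<le> \<lfloor>med (mset (map f I)) + 1/2\<rfloor>"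
    using m by (intro floor_mono) simp
  moreover have "\<lfloor>med (mset (map f I)) + 1/2\<rfloor> \<le> \<lfloor>of_int hi + (1/2::real)\<rfloor>"
    using m by (intro floor_mono) simp
  moreover have "\<lfloor>of_int lo + (1/2::real)\<rfloor> = lo" "\<lfloor>of_int hi + (1/2::real)\<rfloor> = hi" by linarith+
  ultimately show ?thesis unfolding zmed_def nearest_int_def by simp
qed


lemma recon_anc:
  assumes "phylo_tree VP EP rP"
    "psi \<in> reconciliations VP EP VH EH phi" "(v, x) \<in> EP\<^sup>*" "x \<in> leaves VP EP"
  shows "(psi v, phi x) \<in> EH\<^sup>*"
  using assms(3,4)
proof (induction rule: converse_rtrancl_induct)
  case base
  then show ?case using assms(2) unfolding reconciliations_def by auto
next
  case (step v y)
  have "v \<in> VP" using step.hyps(1) pt_basic(2)[OF assms(1)] by auto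
  then have "v \<in> VP - leaves VP EP" using step.hyps(1) unfolding leaves_def by auto
  then have "anc EH (psi v) (psi y)" using assms(2) step.hyps(1) unfolding reconciliations_def by auto
  then show ?case using step.IH step.prems unfolding anc_def by auto
qed

lemma mvert_props:
  assumes hP: "phylo_tree VP EP rP" and hH: "phylo_tree VH EH rH"
    and hphi: "phi ` leaves VP EP \<subseteq> leaves VH EH" and v: "v \<in> VP"
  shows "mvert VP EP VH EH phi v \<in> VH"
    "\<And>z. z \<in> VH \<Longrightarrow> \<forall>x\<in>leaves VP EP. (v, x) \<in> EP\<^sup>* \<longrightarrow> (z, phi x) \<in> EH\<^sup>*
       \<Longrightarrow> (z, mvert VP EP VH EH phi v) \<in> EH\<^sup>*"
proof -
  let ?L = "phi ` {x \<in> leaves VP EP. anc EP v x}"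
  have sub: "?L \<subseteq> VH" using hphi unfolding leaves_def by auto
  have ne: "?L \<noteq> {}" using pt_leaf_below[OF hP v] unfolding anc_def by auto
  show "mvert VP EP VH EH phi v \<in> VH" unfolding mvert_def using pt_lca(1)[OF hH sub ne] .
  fix z assume "z \<in> VH" "\<forall>x\<in>leaves VP EP. (v, x) \<in> EP\<^sup>* \<longrightarrow> (z, phi x) \<in> EH\<^sup>*"
  then show "(z, mvert VP EP VH EH phi v) \<in> EH\<^sup>*" unfolding mvert_def
    using pt_lca(3)[OF hH sub ne, of z] unfolding anc_def by auto
qed

lemma mvert_leaf:
  assumes "x \<in> leaves VP EP"
  shows "mvert VP EP VH EH phi x = phi x"
proof -
  have "{y \<in> leaves VP EP. anc EP x y} = {x}"
  proof
    show "{x} \<subseteq> {y \<in> leaves VP EP. anc EP x y}" using assms by (auto simp: anc_def)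
    show "{y \<in> leaves VP EP. anc EP x y} \<subseteq> {x}"
    proof
      fix y assume "y \<in> {y \<in> leaves VP EP. anc EP x y}"
      then have "(x, y) \<in> EP\<^sup>*" by (auto simp: anc_def)
      then show "y \<in> {x}" using assms unfolding leaves_def by (auto elim: converse_rtranclE)
    qed
  qed
  then show ?thesis unfolding mvert_def lca_def by simp
qed

lemma psi_med_char:
  assumes hP: "phylo_tree VP EP rP" and hH: "phylo_tree VH EH rH"
    and hphi: "phi ` leaves VP EP \<subseteq> leaves VH EH"
    and hl: "l \<ge> 1"
    and hpsi: "\<forall>i\<in>{1..l}. psi i \<in> reconciliations VP EP VH EH phi"
    and v: "v \<in> VP"
  shows "psi_med VP EP VH EH rH phi l psi v \<in> VH \<and>
     (psi_med VP EP VH EH rH phi l psi v, mvert VP EP VH EH phi v) \<in> EH\<^sup>* \<and>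
     int (depth EH rH (psi_med VP EP VH EH rH phi l psi v)) =
       int (depth EH rH (mvert VP EP VH EH phi v)) -
       zmed (mset (map (\<lambda>i. int (dist EH (mvert VP EP VH EH phi v) (psi i v))) [1..<l+1]))"
proof -
  let ?M = "mvert VP EP VH EH phi v"
  let ?f = "\<lambda>i. int (dist EH ?M (psi i v))"
  let ?Z = "zmed (mset (map ?f [1..<l+1]))"
  have MV: "?M \<in> VH" using mvert_props(1)[OF hP hH hphi v] .
  have anc_i: "(psi i v, ?M) \<in> EH\<^sup>*" if "i \<in> {1..l}" for i
  proof -
    have r: "psi i \<in> reconciliations VP EP VH EH phi" using hpsi that by auto
    have "psi i v \<in> VH" using r v unfolding reconciliations_def by auto
    then show ?thesis using mvert_props(2)[OF hP hH hphi v] recon_anc[OF hP r] by auto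
  qed
  have bnd: "\<forall>i\<in>set [1..<l+1]. 0 \<le> ?f i \<and> ?f i \<le> int (depth EH rH ?M)"
  proof
    fix i assume "i \<in> set [1..<l+1]"
    then have "i \<in> {1..l}" by auto
    then have "(psi i v, ?M) \<in> EH\<^sup>*" by (rule anc_i)
    then show "0 \<le> ?f i \<and> ?f i \<le> int (depth EH rH ?M)" using pt_dist[OF hH _ MV] by auto
  qed
  have ne: "[1..<l+1] \<noteq> []" using hl by auto
  have Zb: "0 \<le> ?Z \<and> ?Z \<le> int (depth EH rH ?M)" using zmed_bounds[OF bnd ne] .
  obtain w where w: "(w, ?M) \<in> EH\<^sup>*" "depth EH rH w = depth EH rH ?M - nat ?Z"
    using pt_select[OF hH MV, of "nat ?Z"] Zb by (metis nat_le_iff)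
  have wV: "w \<in> VH" using pt_anc_in[OF hH w(1) MV] .
  have dw: "int (dist EH ?M w) = ?Z" using pt_dist[OF hH w(1) MV] w(2) Zb by auto
  have "psi_med VP EP VH EH rH phi l psi v = w"
    unfolding psi_med_def
  proof (rule the_equality)
    show "w \<in> Aset VP EP VH EH rH phi v \<and> int (dist EH ?M w) = ?Z"
      unfolding Aset_def anc_def using wV w(1) dw pt_basic(4)[OF hH wV] by auto
  next
    fix w' assume "w' \<in> Aset VP EP VH EH rH phi v \<and> int (dist EH ?M w') = ?Z"
    then have w': "(w', ?M) \<in> EH\<^sup>*" "int (dist EH ?M w') = ?Z" unfolding Aset_def anc_def by auto
    have "depth EH rH w' = depth EH rH w" using pt_dist[OF hH w'(1) MV] w' dw pt_dist[OF hH w(1) MV] by auto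
    then have "(w', w) \<in> EH\<^sup>*" "(w, w') \<in> EH\<^sup>*"
      using pt_anc_by_depth[OF hH w'(1) w(1) MV] pt_anc_by_depth[OF hH w(1) w'(1) MV] by auto
    then show "w' = w" using pt_antisym[OF hH] by auto
  qed
  then show ?thesis using wV w Zb by auto
qed

theorem mainTheorem2:
  fixes VP :: "'p set" and EP :: "('p \<times> 'p) set" and rP :: 'p
    and VH :: "'h set" and EH :: "('h \<times> 'h) set" and rH :: 'h
    and phi :: "'p \<Rightarrow> 'h" and l :: nat and psi :: "nat \<Rightarrow> 'p \<Rightarrow> 'h"
  assumes "phylo_tree VP EP rP" and "phylo_tree VH EH rH"
    and "phi ` leaves VP EP \<subseteq> leaves VH EH"
    and "l \<ge> 1"
    and "\<forall>i\<in>{1..l}. psi i \<in> reconciliations VP EP VH EH phi"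
    and "\<forall>i\<in>{1..l}. \<forall>j\<in>{1..l}. i \<noteq> j \<longrightarrow> (\<exists>v\<in>VP. psi i v \<noteq> psi j v)"
  shows "psi_med VP EP VH EH rH phi l psi \<in> reconciliations VP EP VH EH phi"
proof -
  note hP = assms(1) and hH = assms(2) and hphi = assms(3) and hl = assms(4) and hpsi = assms(5)
  define pm where "pm = psi_med VP EP VH EH rH phi l psi"
  define M where "M = mvert VP EP VH EH phi"
  define dp where "dp = depth EH rH"
  define Z where "Z v = zmed (mset (map (\<lambda>i. int (dist EH (M v) (psi i v))) [1..<l+1]))" for v
  have C: "pm v \<in> VH \<and> (pm v, M v) \<in> EH\<^sup>* \<and> int (dp (pm v)) = int (dp (M v)) - Z v" if "v \<in> VP" for v
    using psi_med_char[OF hP hH hphi hl hpsi that] unfolding pm_def M_def dp_def Z_def by simp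
  have MV: "M v \<in> VH" if "v \<in> VP" for v using mvert_props(1)[OF hP hH hphi that] unfolding M_def .
  have rec: "psi i \<in> reconciliations VP EP VH EH phi" if "i \<in> set [1..<l+1]" for i
    using hpsi that by auto
  have ne: "[1..<l+1] \<noteq> []" using hl by auto
  have part1: "\<forall>v\<in>VP. pm v \<in> VH" using C by auto
  have part2: "pm x = phi x" if x: "x \<in> leaves VP EP" for x
  proof -
    have xV: "x \<in> VP" using x unfolding leaves_def by auto
    have Mx: "M x = phi x" using mvert_leaf[OF x] unfolding M_def .
    have "\<forall>i\<in>set [1..<l+1]. 0 \<le> int (dist EH (M x) (psi i x)) \<and> int (dist EH (M x) (psi i x)) \<le> 0"
    proof
      fix i assume i: "i \<in> set [1..<l+1]"
      have "psi i x = phi x" using rec[OF i] x unfolding reconciliations_def by auto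
      then show "0 \<le> int (dist EH (M x) (psi i x)) \<and> int (dist EH (M x) (psi i x)) \<le> 0"
        using pt_dist(1)[OF hH _ MV[OF xV], of "M x"] Mx by auto
    qed
    from zmed_bounds[OF this ne] have "Z x = 0" unfolding Z_def by auto
    then have d: "dp (pm x) = dp (phi x)" using C[OF xV] Mx by auto
    have a1: "(pm x, phi x) \<in> EH\<^sup>*" using C[OF xV] Mx by auto
    have a2: "(phi x, pm x) \<in> EH\<^sup>*"
      using pt_anc_by_depth[OF hH _ a1, of "phi x"] MV[OF xV] Mx d unfolding dp_def by auto
    show ?thesis using pt_antisym[OF hH a1 a2] .
  qed
  have part3: "anc EH (pm v) (pm v')" if v: "v \<in> VP - leaves VP EP" and e: "(v, v') \<in> EP" for v v'
  proof -
    have vV: "v \<in> VP" and v'V: "v' \<in> VP" using v e pt_basic(2)[OF hP] by auto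
    have MM: "(M v, M v') \<in> EH\<^sup>*"
    proof -
      have "\<forall>x\<in>leaves VP EP. (v', x) \<in> EP\<^sup>* \<longrightarrow> (M v, phi x) \<in> EH\<^sup>*"
      proof (intro ballI impI)
        fix x assume x: "x \<in> leaves VP EP" "(v', x) \<in> EP\<^sup>*"
        then have "(v, x) \<in> EP\<^sup>*" using e by auto
        then show "(M v, phi x) \<in> EH\<^sup>*"
          using pt_lca(2)[OF hH, of "phi ` {x \<in> leaves VP EP. anc EP v x}"] x hphi
            pt_leaf_below[OF hP vV]
          unfolding M_def mvert_def anc_def leaves_def by blast
      qed
      then show ?thesis using mvert_props(2)[OF hP hH hphi v'V] MV[OF vV] unfolding M_def by auto
    qed
    have a1: "(pm v, M v') \<in> EH\<^sup>*" using C[OF vV] MM by auto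
    have a2: "(pm v', M v') \<in> EH\<^sup>*" using C[OF v'V] by auto
    have "\<forall>i\<in>set [1..<l+1]. int (dist EH (M v') (psi i v')) \<le>
        int (dist EH (M v) (psi i v)) + (int (dp (M v')) - int (dp (M v)))"
    proof
      fix i assume i: "i \<in> set [1..<l+1]"
      have r: "psi i \<in> reconciliations VP EP VH EH phi" using rec[OF i] .
      have "anc EH (psi i v) (psi i v')" using r v e unfolding reconciliations_def by auto
      moreover have "psi i v' \<in> VH" using r v'V unfolding reconciliations_def by auto
      ultimately have le: "dp (psi i v) \<le> dp (psi i v')"
        using pt_depth_le[OF hH] unfolding anc_def dp_def by auto
      have ii: "i \<in> {1..l}" using i by auto
      have b1: "(psi i v, M v) \<in> EH\<^sup>*" "(psi i v', M v') \<in> EH\<^sup>*"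
        using mvert_props(2)[OF hP hH hphi vV] mvert_props(2)[OF hP hH hphi v'V]
          recon_anc[OF hP r] r vV v'V unfolding M_def reconciliations_def by auto
      show "int (dist EH (M v') (psi i v')) \<le>
        int (dist EH (M v) (psi i v)) + (int (dp (M v')) - int (dp (M v)))"
        using pt_dist[OF hH b1(1) MV[OF vV]] pt_dist[OF hH b1(2) MV[OF v'V]] le
        unfolding dp_def by auto
    qed
    from zmed_mono[OF this ne] have "Z v' \<le> Z v + (int (dp (M v')) - int (dp (M v)))"
      unfolding Z_def by simp
    then have "dp (pm v) \<le> dp (pm v')" using C[OF vV] C[OF v'V] by auto
    then show ?thesis using pt_anc_by_depth[OF hH a1 a2 MV[OF v'V]] unfolding dp_def anc_def by auto
  qed
  show ?thesis unfolding reconciliations_def pm_def[symmetric] using part1 part2 part3 by auto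
qed

end
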